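(* Let $G=(V,E)$ be a graph and $\mathcal{C}$ a weighted Max 2-SAT instance over the node variables $\{X_v\}_{v\in V}$ in which any clause containing literals of two distinct variables $X_u,X_v$ satisfies $(u,v)\in E$, and each vertex knows the clauses containing its variable. Given a legal $c$-coloring of $G$, there is a randomized distributed algorithm in the CONGEST model running in $O(c)$ communication rounds which outputs a truth assignment whose expected satisfied weight is at least $3/4$ of the maximum satisfiable weight.
   Context: Weighted Max 2-SAT: clauses with at most two literals each, with nonnegative weights; maximize the total weight of satisfied clauses. CONGEST: synchronous rounds, $O(\log n)$-bit messages per edge per round. A legal coloring gives adjacent vertices different colors. *)

theory Defs
  imports "HOL-Probability.Probability"
begin

(* A literal is (variable, polarity); variables are node identifiers (nat). *)
type_synonym lit = "nat \<times> bool"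
type_synonym clause = "lit list"
type_synonym sat_instance = "(clause \<times> real) list"

definition clause_vars :: "clause \<Rightarrow> nat set" where
  "clause_vars cl = fst ` set cl"

definition sat_clause :: "(nat \<Rightarrow> bool) \<Rightarrow> clause \<Rightarrow> bool" where
  "sat_clause a cl \<longleftrightarrow> (\<exists>(x, p) \<in> set cl. a x = p)"

definition sat_weight :: "sat_instance \<Rightarrow> (nat \<Rightarrow> bool) \<Rightarrow> real" where
  "sat_weight C a = sum_list (map (\<lambda>(cl, w). if sat_clause a cl then w else 0) C)"

definition opt_weight :: "sat_instance \<Rightarrow> real" where
  "opt_weight C = (SUP a. sat_weight C a)"

definition weighted_max2sat :: "sat_instance \<Rightarrow> bool" where
  "weighted_max2sat C \<longleftrightarrow> (\<forall>(cl, w) \<in> set C. length cl \<le> 2 \<and> w \<ge> 0)"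

definition graph :: "nat set \<Rightarrow> (nat \<Rightarrow> nat \<Rightarrow> bool) \<Rightarrow> bool" where
  "graph V E \<longleftrightarrow> finite V \<and> (\<forall>u v. E u v \<longrightarrow> u \<in> V \<and> v \<in> V \<and> u \<noteq> v \<and> E v u)"

definition legal_coloring :: "nat set \<Rightarrow> (nat \<Rightarrow> nat \<Rightarrow> bool) \<Rightarrow> (nat \<Rightarrow> nat) \<Rightarrow> nat \<Rightarrow> bool" where
  "legal_coloring V E col c \<longleftrightarrow> (\<forall>v\<in>V. col v < c) \<and> (\<forall>u v. E u v \<longrightarrow> col u \<noteq> col v)"

definition compatible :: "nat set \<Rightarrow> (nat \<Rightarrow> nat \<Rightarrow> bool) \<Rightarrow> sat_instance \<Rightarrow> bool" where
  "compatible V E C \<longleftrightarrow> (\<forall>(cl, w) \<in> set C. clause_vars cl \<subseteq> V \<and>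
      (\<forall>u\<in>clause_vars cl. \<forall>v\<in>clause_vars cl. u \<noteq> v \<longrightarrow> E u v))"

(* local input of a node: (own id, number of colors c, own color, neighbour ids,
   the weighted clauses containing its variable) *)
type_synonym linput = "nat \<times> nat \<times> nat \<times> nat set \<times> sat_instance"

(* events in the local history: a random draw, or the messages received in a round
   (indexed by sender id) *)
datatype event = Rand real | Recv "nat \<Rightarrow> bool list"

(* the local state of a node is its full history (input plus all events) *)
type_synonym state = "linput \<times> event list"

(* a distributed randomized algorithm: in each round, every node first draws a random value
   from a distribution depending on its state, then sends a bit-string message to each
   neighbour (a function of its state), then receives the neighbours' messages. *)
record algo =
  coin :: "state \<Rightarrow> real pmf"
  send :: "state \<Rightarrow> nat \<Rightarrow> bool list"
  out  :: "state \<Rightarrow> bool"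

definition init_config :: "nat set \<Rightarrow> (nat \<Rightarrow> nat \<Rightarrow> bool) \<Rightarrow> sat_instance \<Rightarrow> (nat \<Rightarrow> nat) \<Rightarrow> nat
    \<Rightarrow> nat \<Rightarrow> state" where
  "init_config V E C col c v =
     ((v, c, col v, {u. E v u}, filter (\<lambda>(cl, w). v \<in> clause_vars cl) C), [])"

definition drawn :: "nat set \<Rightarrow> (nat \<Rightarrow> state) \<Rightarrow> (nat \<Rightarrow> real) \<Rightarrow> nat \<Rightarrow> state" where
  "drawn V \<sigma> \<rho> v = (if v \<in> V then (fst (\<sigma> v), snd (\<sigma> v) @ [Rand (\<rho> v)]) else \<sigma> v)"

definition deliver :: "algo \<Rightarrow> nat set \<Rightarrow> (nat \<Rightarrow> nat \<Rightarrow> bool) \<Rightarrow> (nat \<Rightarrow> state) \<Rightarrow> nat \<Rightarrow> state" where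
  "deliver A V E \<tau> v = (if v \<in> V then
      (fst (\<tau> v), snd (\<tau> v) @ [Recv (\<lambda>u. if u \<in> V \<and> E u v then send A (\<tau> u) v else [])])
    else \<tau> v)"

definition step :: "algo \<Rightarrow> nat set \<Rightarrow> (nat \<Rightarrow> nat \<Rightarrow> bool) \<Rightarrow> (nat \<Rightarrow> state) \<Rightarrow> (nat \<Rightarrow> state) pmf" where
  "step A V E \<sigma> = map_pmf (\<lambda>\<rho>. deliver A V E (drawn V \<sigma> \<rho>)) (Pi_pmf V 0 (\<lambda>v. coin A (\<sigma> v)))"

fun run :: "algo \<Rightarrow> nat set \<Rightarrow> (nat \<Rightarrow> nat \<Rightarrow> bool) \<Rightarrow> (nat \<Rightarrow> state) \<Rightarrow> nat \<Rightarrow> (nat \<Rightarrow> state) pmf" where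
  "run A V E \<sigma>0 0 = return_pmf \<sigma>0"
| "run A V E \<sigma>0 (Suc r) = bind_pmf (run A V E \<sigma>0 r) (step A V E)"

definition congest_bandwidth :: "algo \<Rightarrow> nat set \<Rightarrow> (nat \<Rightarrow> nat \<Rightarrow> bool) \<Rightarrow> (nat \<Rightarrow> state)
    \<Rightarrow> nat \<Rightarrow> nat \<Rightarrow> bool" where
  "congest_bandwidth A V E \<sigma>0 R B \<longleftrightarrow>
     (\<forall>r<R. \<forall>\<sigma> \<in> set_pmf (run A V E \<sigma>0 r). \<forall>\<rho>.
        (\<forall>v\<in>V. \<rho> v \<in> set_pmf (coin A (\<sigma> v))) \<longrightarrow>
        (\<forall>u v. E u v \<longrightarrow>
           length (send A (drawn V \<sigma> \<rho> u) v) \<le> B * (nat \<lceil>log 2 (real (card V))\<rceil> + 1)))"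

definition output_assignment :: "algo \<Rightarrow> (nat \<Rightarrow> state) \<Rightarrow> nat \<Rightarrow> bool" where
  "output_assignment A \<sigma> v = out A (\<sigma> v)"

end

theory Submission imports Defs begin


definition rind :: "bool \<Rightarrow> real" where "rind b = (if b then 1 else 0)"

lemma rind_eq_1[simp]: "(rind b = 1) = b" by (simp add: rind_def)

definition psat :: "(nat \<Rightarrow> bool option) \<Rightarrow> clause \<Rightarrow> bool" where
  "psat pa cl \<longleftrightarrow> (\<exists>(x,p)\<in>set cl. pa x = Some p)"
definition pfals :: "(nat \<Rightarrow> bool option) \<Rightarrow> clause \<Rightarrow> bool" where
  "pfals pa cl \<longleftrightarrow> (\<forall>(x,p)\<in>set cl. pa x = Some (\<not>p))"
definition beta :: "(nat \<Rightarrow> bool option) \<Rightarrow> clause \<Rightarrow> real" where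
  "beta pa cl = (rind (psat pa cl) + rind (\<not> pfals pa cl)) / 2"

definition asum :: "(nat \<Rightarrow> bool option) \<Rightarrow> nat \<Rightarrow> bool \<Rightarrow> sat_instance \<Rightarrow> real" where
  "asum pa v b L = sum_list (map (\<lambda>(cl,w). w * (beta (pa(v:=Some b)) cl - beta pa cl)) L)"

definition prob :: "(nat \<Rightarrow> bool option) \<Rightarrow> nat \<Rightarrow> sat_instance \<Rightarrow> real" where
  "prob pa v L = (if asum pa v False L \<le> 0 then 1 else if asum pa v True L \<le> 0 then 0
      else asum pa v True L / (asum pa v True L + asum pa v False L))"

definition last_msgs :: "event list \<Rightarrow> nat \<Rightarrow> bool list" where
  "last_msgs evs = (if evs = [] then (\<lambda>u. []) else (case last evs of Recv m \<Rightarrow> m | Rand _ \<Rightarrow> (\<lambda>u. [])))"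

definition local_pa :: "nat \<Rightarrow> event list \<Rightarrow> nat \<Rightarrow> bool option" where
  "local_pa v evs u = (if u = v then None else (case last_msgs evs u of [b] \<Rightarrow> Some b | _ \<Rightarrow> None))"

definition alg_coin :: "state \<Rightarrow> real pmf" where
  "alg_coin s = (case s of ((v, c, cv, N, L), evs) \<Rightarrow>
     if length evs div 2 = cv then map_pmf rind (bernoulli_pmf (prob (local_pa v evs) v L))
     else return_pmf 0)"

definition alg_send :: "state \<Rightarrow> nat \<Rightarrow> bool list" where
  "alg_send s u = (case s of ((v, c, cv, N, L), evs) \<Rightarrow>
     if 2 * cv < length evs then [evs ! (2 * cv) = Rand 1] else [])"

definition alg_out :: "state \<Rightarrow> bool" where
  "alg_out s = (case s of ((v, c, cv, N, L), evs) \<Rightarrow> evs ! (2 * cv) = Rand 1)"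

definition Alg :: algo where "Alg = \<lparr>coin = alg_coin, send = alg_send, out = alg_out\<rparr>"

lemma send_len: "length (send Alg s u) \<le> 1"
  by (cases s) (auto simp: Alg_def alg_send_def split: prod.splits)

lemma frac_range: "\<not> (B::real) \<le> 0 \<Longrightarrow> \<not> A \<le> 0 \<Longrightarrow> 0 \<le> A / (A + B) \<and> A / (A + B) \<le> 1"
proof -
  assume "\<not> B \<le> 0" "\<not> A \<le> 0"
  then have pos: "0 < A + B" "0 < A" "0 < B" by auto
  have "A / (A + B) \<le> 1" using pos by (simp add: divide_le_eq)
  moreover have "0 \<le> A / (A + B)" using pos by simp
  ultimately show ?thesis by simp
qed

lemma prob_range: "0 \<le> prob pa v L \<and> prob pa v L \<le> 1"
  unfolding prob_def using frac_range[of "asum pa v False L" "asum pa v True L"] by simp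

lemma integral_bind_pmf_bounded:
  fixes f :: "'b \<Rightarrow> real"
  assumes "\<And>x. \<bar>f x\<bar> \<le> B"
  shows "measure_pmf.expectation (bind_pmf M N) f = measure_pmf.expectation M (\<lambda>x. measure_pmf.expectation (N x) f)"
  unfolding measure_pmf_bind
  apply (rule integral_bind[where K="count_space UNIV" and B=B and B'=1])
  using assms by (auto simp: measure_pmf_in_subprob_algebra)

lemma bounded_integrable:
  fixes f :: "'b \<Rightarrow> real"
  assumes "\<And>x. \<bar>f x\<bar> \<le> B"
  shows "integrable (measure_pmf M) f"
  apply (rule measure_pmf.integrable_const_bound[where B=B])
  using assms by auto

lemma sum_list_filter_idx:
  "sum_list (map g (filter P xs)) = (\<Sum>i\<in>{i. i < length xs \<and> P (xs ! i)}. g (xs ! i))"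
proof -
  have "sum_list (map g (filter P xs)) = sum_list (map (\<lambda>x. if P x then g x else 0) xs)"
    by (induction xs) auto
  also have "\<dots> = (\<Sum>i\<in>{..<length xs}. if P (xs ! i) then g (xs ! i) else 0)"
    by (simp add: sum_list_sum_nth atLeast0LessThan)
  also have "\<dots> = (\<Sum>i\<in>{i\<in>{..<length xs}. P (xs ! i)}. g (xs ! i))"
    by (rule sum.inter_filter[symmetric]) simp
  also have "{i\<in>{..<length xs}. P (xs ! i)} = {i. i < length xs \<and> P (xs ! i)}" by auto
  finally show ?thesis by simp
qed

lemma cv_mem: "(x,p) \<in> set cl \<Longrightarrow> x \<in> clause_vars cl"
  unfolding clause_vars_def by (rule image_eqI[of _ fst "(x,p)"]) simp_all

lemma sat_cong: "(\<And>x. x \<in> clause_vars cl \<Longrightarrow> a x = a' x) \<Longrightarrow> sat_clause a cl = sat_clause a' cl"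
proof -
  assume a: "\<And>x. x \<in> clause_vars cl \<Longrightarrow> a x = a' x"
  have "\<And>x p. (x,p) \<in> set cl \<Longrightarrow> a x = a' x" using a cv_mem by blast
  then show ?thesis unfolding sat_clause_def by (intro bex_cong refl; clarsimp)
qed

lemma beta_cong: "(\<And>x. x \<in> clause_vars cl \<Longrightarrow> pa x = pa' x) \<Longrightarrow> beta pa cl = beta pa' cl"
proof -
  assume a: "\<And>x. x \<in> clause_vars cl \<Longrightarrow> pa x = pa' x"
  have "\<And>x p. (x,p) \<in> set cl \<Longrightarrow> pa x = pa' x" using a cv_mem by blast
  then have "psat pa cl = psat pa' cl" "pfals pa cl = pfals pa' cl"
    unfolding psat_def pfals_def by (intro bex_cong ball_cong refl; clarsimp)+
  then show ?thesis by (simp add: beta_def)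
qed

lemma asum_cong: "(\<And>cl w x. (cl, w) \<in> set L \<Longrightarrow> x \<in> clause_vars cl \<Longrightarrow> pa x = pa' x) \<Longrightarrow>
    asum pa v b L = asum pa' v b L"
proof -
  assume a: "\<And>cl w x. (cl, w) \<in> set L \<Longrightarrow> x \<in> clause_vars cl \<Longrightarrow> pa x = pa' x"
  have eq: "\<And>cl w. (cl,w) \<in> set L \<Longrightarrow> beta (pa(v:=Some b)) cl = beta (pa'(v:=Some b)) cl \<and> beta pa cl = beta pa' cl"
    using a by (auto intro!: beta_cong)
  show ?thesis unfolding asum_def
    by (intro arg_cong[where f=sum_list] map_cong refl) (auto simp: eq split: prod.splits)
qed

lemma prob_cong: "(\<And>cl w x. (cl, w) \<in> set L \<Longrightarrow> x \<in> clause_vars cl \<Longrightarrow> pa x = pa' x) \<Longrightarrow>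
    prob pa v L = prob pa' v L"
  unfolding prob_def using asum_cong[of L pa pa' v] by simp




lemma psat_simps[simp]: "psat pa [] = False" "psat pa ((x,p)#cl) = (pa x = Some p \<or> psat pa cl)"
  by (simp_all add: psat_def)
lemma pfals_simps[simp]: "pfals pa [] = True" "pfals pa ((x,p)#cl) = (pa x = Some (\<not>p) \<and> pfals pa cl)"
  by (simp_all add: pfals_def)
lemma sat_simps[simp]: "sat_clause a [] = False" "sat_clause a ((x,p)#cl) = (a x = p \<or> sat_clause a cl)"
  by (simp_all add: sat_clause_def)

lemma e_psat:
  assumes pv: "pa v = None"
  shows "psat (pa(v:=Some b)) cl \<longleftrightarrow> psat pa cl \<or> (v,b) \<in> set cl"
  using pv
proof (induction cl)
  case (Cons l cl)
  obtain x p where l: "l = (x,p)" by (cases l)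
  show ?case using Cons unfolding l by (cases "x = v") auto
qed simp

lemma e_pfals_upd:
  "pfals (pa(v:=Some b)) cl \<longleftrightarrow> (\<forall>(x,p)\<in>set cl. x \<noteq> v \<longrightarrow> pa x = Some (\<not>p)) \<and> (v, b) \<notin> set cl"
proof (induction cl)
  case (Cons l cl)
  obtain x p where l: "l = (x,p)" by (cases l)
  show ?case using Cons unfolding l by (cases "x = v") auto
qed simp

lemma e_pfals:
  assumes pv: "pa v = None"
  shows "pfals pa cl \<longleftrightarrow> (\<forall>(x,p)\<in>set cl. x \<noteq> v \<longrightarrow> pa x = Some (\<not>p)) \<and> (v,True) \<notin> set cl \<and> (v,False) \<notin> set cl"
  using pv
proof (induction cl)
  case (Cons l cl)
  obtain x p where l: "l = (x,p)" by (cases l)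
  show ?case using Cons unfolding l by (cases "x = v") auto
qed simp

lemma e_sat:
  "sat_clause (h(v:=b)) cl \<longleftrightarrow> (\<exists>(x,p)\<in>set cl. x \<noteq> v \<and> h x = p) \<or> (v,b) \<in> set cl"
proof (induction cl)
  case (Cons l cl)
  obtain x p where l: "l = (x,p)" by (cases l)
  show ?case using Cons unfolding l by (cases "x = v") auto
qed simp

lemma clause_facts:
  assumes pv: "pa v = None" and cons: "\<And>x y. pa x = Some y \<Longrightarrow> h x = y"
  shows "0 \<le> beta (pa(v:=Some True)) cl + beta (pa(v:=Some False)) cl - 2 * beta pa cl"
    and "\<not> h v \<Longrightarrow> rind (sat_clause h cl) - rind (sat_clause (h(v:=True)) cl)
            \<le> 2 * (beta (pa(v:=Some False)) cl - beta pa cl)"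
    and "h v \<Longrightarrow> rind (sat_clause h cl) - rind (sat_clause (h(v:=False)) cl)
            \<le> 2 * (beta (pa(v:=Some True)) cl - beta pa cl)"
proof -
  define hasT where "hasT = ((v,True) \<in> set cl)"
  define hasF where "hasF = ((v,False) \<in> set cl)"
  define s where "s = psat pa cl"
  define RF where "RF = (\<forall>(x,p)\<in>set cl. x \<noteq> v \<longrightarrow> pa x = Some (\<not>p))"
  define OS where "OS = (\<exists>(x,p)\<in>set cl. x \<noteq> v \<and> h x = p)"
  have e1T: "psat (pa(v:=Some True)) cl \<longleftrightarrow> s \<or> hasT" unfolding s_def hasT_def by (rule e_psat[of pa v, OF pv])
  have e1F: "psat (pa(v:=Some False)) cl \<longleftrightarrow> s \<or> hasF" unfolding s_def hasF_def by (rule e_psat[of pa v, OF pv])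
  have e2: "pfals pa cl \<longleftrightarrow> RF \<and> \<not>hasT \<and> \<not>hasF" unfolding RF_def hasT_def hasF_def by (rule e_pfals[of pa v, OF pv])
  have e3T: "pfals (pa(v:=Some True)) cl \<longleftrightarrow> RF \<and> \<not>hasT"
    unfolding RF_def hasT_def using e_pfals_upd[of pa v True cl] by simp
  have e3F: "pfals (pa(v:=Some False)) cl \<longleftrightarrow> RF \<and> \<not>hasF"
    unfolding RF_def hasF_def using e_pfals_upd[of pa v False cl] by simp
  have e4T: "sat_clause (h(v:=True)) cl \<longleftrightarrow> OS \<or> hasT" unfolding OS_def hasT_def by (rule e_sat)
  have e4F: "sat_clause (h(v:=False)) cl \<longleftrightarrow> OS \<or> hasF" unfolding OS_def hasF_def by (rule e_sat)
  have r1: "s \<Longrightarrow> OS"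
  proof -
    assume s then obtain x p where xp: "(x,p) \<in> set cl" "pa x = Some p" unfolding s_def psat_def by blast
    then have "x \<noteq> v" "h x = p" using pv cons by auto
    then show OS unfolding OS_def using xp(1) by blast
  qed
  have r2: "RF \<Longrightarrow> \<not> OS"
  proof
    assume RF OS
    then obtain x p where xp: "(x,p) \<in> set cl" "x \<noteq> v" "h x = p" unfolding OS_def by blast
    with \<open>RF\<close> have "pa x = Some (\<not>p)" unfolding RF_def by blast
    then have "h x = (\<not>p)" by (rule cons)
    with xp show False by simp
  qed
  show "0 \<le> beta (pa(v:=Some True)) cl + beta (pa(v:=Some False)) cl - 2 * beta pa cl"
    unfolding beta_def e1T e1F e2 e3T e3F s_def[symmetric] rind_def
    using r1 r2 by (cases hasT; cases hasF; cases s; cases RF; cases OS) simp_all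
  show "\<not> h v \<Longrightarrow> rind (sat_clause h cl) - rind (sat_clause (h(v:=True)) cl)
            \<le> 2 * (beta (pa(v:=Some False)) cl - beta pa cl)"
  proof -
    assume "\<not> h v"
    then have "h(v:=False) = h" by (simp add: fun_upd_idem)
    then have e5: "sat_clause h cl \<longleftrightarrow> OS \<or> hasF" using e4F by simp
    show ?thesis
      unfolding beta_def e1T e1F e2 e3T e3F e4T e5 s_def[symmetric] rind_def
      using r1 r2 by (cases hasT; cases hasF; cases s; cases RF; cases OS) simp_all
  qed
  show "h v \<Longrightarrow> rind (sat_clause h cl) - rind (sat_clause (h(v:=False)) cl)
            \<le> 2 * (beta (pa(v:=Some True)) cl - beta pa cl)"
  proof -
    assume "h v"
    then have "h(v:=True) = h" by (simp add: fun_upd_idem)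
    then have e5: "sat_clause h cl \<longleftrightarrow> OS \<or> hasT" using e4T by simp
    show ?thesis
      unfolding beta_def e1T e1F e2 e3T e3F e4F e5 s_def[symmetric] rind_def
      using r1 r2 by (cases hasT; cases hasF; cases s; cases RF; cases OS) simp_all
  qed
qed




lemma arith_core:
  fixes A Bb L p :: real
  assumes "0 \<le> A + Bb" "L \<le> 2 * Bb"
    and "p = (if Bb \<le> 0 then 1 else if A \<le> 0 then 0 else A / (A + Bb))"
  shows "0 \<le> p * (A - L) + (1 - p) * Bb"
proof (cases "Bb \<le> 0")
  case True then show ?thesis using assms by simp
next
  case False
  show ?thesis
  proof (cases "A \<le> 0")
    case True then show ?thesis using assms False by simp
  next
    case A: False
    have pos: "0 < A + Bb" using A False by simp
    have p: "p = A / (A + Bb)" using assms A False by simp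
    have p0: "0 \<le> p" using p pos A by simp
    have q: "1 - p = Bb / (A + Bb)" using pos unfolding p by (simp add: field_simps)
    have "p * (A - 2*Bb) + (1 - p) * Bb = A/(A+Bb) * (A - 2*Bb) + Bb/(A+Bb) * Bb"
      by (subst q, subst p, rule refl)
    also have "\<dots> = (A * (A - 2*Bb) + Bb * Bb) / (A + Bb)"
      by (simp add: add_divide_distrib)
    also have "A * (A - 2*Bb) + Bb * Bb = (A - Bb)^2" by (simp add: power2_eq_square algebra_simps)
    finally have eq: "p * (A - 2*Bb) + (1 - p) * Bb = (A - Bb)^2 / (A + Bb)" .
    have "0 \<le> (A - Bb)^2 / (A + Bb)" using pos by simp
    then have "0 \<le> p * (A - 2*Bb) + (1 - p) * Bb" using eq by simp
    moreover have "p * (A - 2*Bb) \<le> p * (A - L)" using p0 assms(2) by (simp add: mult_left_mono)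
    ultimately show ?thesis by linarith
  qed
qed

lemma arith_core2:
  fixes A Bb L p :: real
  assumes "0 \<le> A + Bb" "L \<le> 2 * A"
    and "p = (if Bb \<le> 0 then 1 else if A \<le> 0 then 0 else A / (A + Bb))"
  shows "0 \<le> p * A + (1 - p) * (Bb - L)"
proof (cases "Bb \<le> 0")
  case True then show ?thesis using assms by simp
next
  case False
  show ?thesis
  proof (cases "A \<le> 0")
    case True then show ?thesis using assms False by simp
  next
    case A: False
    have pos: "0 < A + Bb" using A False by simp
    have p: "p = A / (A + Bb)" using assms A False by simp
    have p1: "0 \<le> 1 - p" using p frac_range[of Bb A] A False by simp
    have q: "1 - p = Bb / (A + Bb)" using pos unfolding p by (simp add: field_simps)
    have "p * A + (1 - p) * (Bb - 2*A) = A/(A+Bb) * A + Bb/(A+Bb) * (Bb - 2*A)"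
      by (subst q, subst p, rule refl)
    also have "\<dots> = (A * A + Bb * (Bb - 2*A)) / (A + Bb)"
      by (simp add: add_divide_distrib)
    also have "A * A + Bb * (Bb - 2*A) = (A - Bb)^2" by (simp add: power2_eq_square algebra_simps)
    finally have eq: "p * A + (1 - p) * (Bb - 2*A) = (A - Bb)^2 / (A + Bb)" .
    have "0 \<le> (A - Bb)^2 / (A + Bb)" using pos by simp
    then have "0 \<le> p * A + (1 - p) * (Bb - 2*A)" using eq by simp
    moreover have "(1 - p) * (Bb - 2*A) \<le> (1 - p) * (Bb - L)" using p1 assms(2) by (simp add: mult_left_mono)
    ultimately show ?thesis by linarith
  qed
qed

lemma local_ineq:
  fixes I :: "nat set" and cl :: "nat \<Rightarrow> clause" and w :: "nat \<Rightarrow> real"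
  assumes fin: "finite I" and wpos: "\<And>i. i \<in> I \<Longrightarrow> 0 \<le> w i"
    and pv: "pa v = None" and cons: "\<And>x y. pa x = Some y \<Longrightarrow> h x = y"
    and Adef: "A = (\<Sum>i\<in>I. w i * (beta (pa(v:=Some True)) (cl i) - beta pa (cl i)))"
    and Bdef: "Bb = (\<Sum>i\<in>I. w i * (beta (pa(v:=Some False)) (cl i) - beta pa (cl i)))"
    and pdef: "p = (if Bb \<le> 0 then 1 else if A \<le> 0 then 0 else A / (A + Bb))"
  shows "(\<Sum>i\<in>I. w i * (beta pa (cl i) + rind (sat_clause h (cl i))))
     \<le> p * (\<Sum>i\<in>I. w i * (beta (pa(v:=Some True)) (cl i) + rind (sat_clause (h(v:=True)) (cl i))))
       + (1 - p) * (\<Sum>i\<in>I. w i * (beta (pa(v:=Some False)) (cl i) + rind (sat_clause (h(v:=False)) (cl i))))"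
proof -
  define Phi where "Phi = (\<Sum>i\<in>I. w i * (beta pa (cl i) + rind (sat_clause h (cl i))))"
  define LT where "LT = (\<Sum>i\<in>I. w i * (rind (sat_clause h (cl i)) - rind (sat_clause (h(v:=True)) (cl i))))"
  define LF where "LF = (\<Sum>i\<in>I. w i * (rind (sat_clause h (cl i)) - rind (sat_clause (h(v:=False)) (cl i))))"
  have eT: "(\<Sum>i\<in>I. w i * (beta (pa(v:=Some True)) (cl i) + rind (sat_clause (h(v:=True)) (cl i)))) = Phi + A - LT"
    unfolding Phi_def Adef LT_def by (simp add: sum.distrib[symmetric] sum_subtractf[symmetric] algebra_simps)
  have eF: "(\<Sum>i\<in>I. w i * (beta (pa(v:=Some False)) (cl i) + rind (sat_clause (h(v:=False)) (cl i)))) = Phi + Bb - LF"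
    unfolding Phi_def Bdef LF_def by (simp add: sum.distrib[symmetric] sum_subtractf[symmetric] algebra_simps)
  have AB: "0 \<le> A + Bb"
  proof -
    have "A + Bb = (\<Sum>i\<in>I. w i * (beta (pa(v:=Some True)) (cl i) + beta (pa(v:=Some False)) (cl i) - 2 * beta pa (cl i)))"
      unfolding Adef Bdef by (simp add: sum.distrib[symmetric] algebra_simps)
    moreover have "\<dots> \<ge> 0" using wpos clause_facts(1)[of pa v h, OF pv cons] by (intro sum_nonneg mult_nonneg_nonneg) auto
    ultimately show ?thesis by simp
  qed
  have p01: "0 \<le> p \<and> p \<le> 1"
  proof (cases "Bb \<le> 0")
    case True then show ?thesis by (simp add: pdef)
  next
    case False
    show ?thesis
    proof (cases "A \<le> 0")
      case True then show ?thesis using False by (simp add: pdef)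
    next
      case A: False
      have pos: "0 < A + Bb" using A False by simp
      have "A / (A + Bb) \<le> 1" using pos False by (simp add: divide_le_eq)
      moreover have "0 \<le> A / (A + Bb)" using pos A by simp
      ultimately show ?thesis using A False by (simp add: pdef)
    qed
  qed
  show ?thesis
  proof (cases "h v")
    case False
    have LF0: "LF = 0" unfolding LF_def using False
      by (simp add: fun_upd_idem)
    have "LT \<le> (\<Sum>i\<in>I. w i * (2 * (beta (pa(v:=Some False)) (cl i) - beta pa (cl i))))"
      unfolding LT_def using wpos clause_facts(2)[of pa v h, OF pv cons False] by (intro sum_mono mult_left_mono) auto
    also have "\<dots> = 2 * Bb" unfolding Bdef by (simp add: sum_distrib_left algebra_simps)
    finally have "LT \<le> 2 * Bb" .
    from arith_core[OF AB this pdef]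
    have "0 \<le> p * (A - LT) + (1 - p) * Bb" .
    then show ?thesis unfolding Phi_def[symmetric] eT eF LF0 by (simp add: algebra_simps)
  next
    case True
    have LT0: "LT = 0" unfolding LT_def using True
      by (simp add: fun_upd_idem)
    have "LF \<le> (\<Sum>i\<in>I. w i * (2 * (beta (pa(v:=Some True)) (cl i) - beta pa (cl i))))"
      unfolding LF_def using wpos clause_facts(3)[of pa v h, OF pv cons True] by (intro sum_mono mult_left_mono) auto
    also have "\<dots> = 2 * A" unfolding Adef by (simp add: sum_distrib_left algebra_simps)
    finally have L: "LF \<le> 2 * A" .
    from arith_core2[OF AB L pdef]
    have "0 \<le> p * A + (1 - p) * (Bb - LF)" .
    then show ?thesis unfolding Phi_def[symmetric] eT eF LT0 by (simp add: algebra_simps)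
  qed
qed




locale setting =
  fixes V :: "nat set" and E :: "nat \<Rightarrow> nat \<Rightarrow> bool" and C :: sat_instance
    and col :: "nat \<Rightarrow> nat" and c :: nat
  assumes G: "graph V E" and W: "weighted_max2sat C" and CP: "compatible V E C"
    and LC: "legal_coloring V E col c"
begin

lemma finV: "finite V" using G by (simp add: graph_def)

lemma Esym: "E u v \<Longrightarrow> E v u \<and> u \<in> V \<and> v \<in> V \<and> u \<noteq> v" using G by (simp add: graph_def)

lemma Ecol: "E u v \<Longrightarrow> col u \<noteq> col v" using LC by (simp add: legal_coloring_def)

lemma colV: "v \<in> V \<Longrightarrow> col v < c" using LC by (simp add: legal_coloring_def)

lemma clause_adj: "(cl, w) \<in> set C \<Longrightarrow> u \<in> clause_vars cl \<Longrightarrow> v \<in> clause_vars cl \<Longrightarrow> u \<noteq> v \<Longrightarrow> E u v"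
  using CP unfolding compatible_def by fastforce

lemma clause_V: "(cl, w) \<in> set C \<Longrightarrow> u \<in> clause_vars cl \<Longrightarrow> u \<in> V"
  using CP unfolding compatible_def by fastforce

lemma clause_w: "(cl, w) \<in> set C \<Longrightarrow> 0 \<le> w"
  using W unfolding weighted_max2sat_def by fastforce

abbreviation "init \<equiv> init_config V E C col c"

fun evs :: "nat \<Rightarrow> (nat \<Rightarrow> bool) \<Rightarrow> nat \<Rightarrow> event list" where
  "evs 0 d v = []"
| "evs (Suc r) d v = evs r d v @ [Rand (if col v = r then rind (d v) else 0),
     Recv (\<lambda>u. if u \<in> V \<and> E u v \<and> col u \<le> r then [d u] else [])]"

definition cfg :: "nat \<Rightarrow> (nat \<Rightarrow> bool) \<Rightarrow> nat \<Rightarrow> state" where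
  "cfg r d v = (if v \<in> V then (fst (init v), evs r d v) else init v)"

definition upd :: "nat \<Rightarrow> (nat \<Rightarrow> bool) \<Rightarrow> (nat \<Rightarrow> real) \<Rightarrow> nat \<Rightarrow> bool" where
  "upd r d \<rho> = (\<lambda>v. if v \<in> V \<and> col v = r then \<rho> v = 1 else d v)"

definition gpa :: "nat \<Rightarrow> (nat \<Rightarrow> bool) \<Rightarrow> nat \<Rightarrow> bool option" where
  "gpa r d x = (if x \<in> V \<and> col x < r then Some (d x) else None)"

definition Lv :: "nat \<Rightarrow> sat_instance" where
  "Lv v = filter (\<lambda>(cl, w). v \<in> clause_vars cl) C"

definition pg :: "nat \<Rightarrow> (nat \<Rightarrow> bool) \<Rightarrow> nat \<Rightarrow> real" where
  "pg r d v = prob (gpa r d) v (Lv v)"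

definition Pi_r :: "nat \<Rightarrow> (nat \<Rightarrow> bool) \<Rightarrow> (nat \<Rightarrow> real) pmf" where
  "Pi_r r d = Pi_pmf V 0 (\<lambda>v. coin Alg (cfg r d v))"

fun Dist :: "nat \<Rightarrow> (nat \<Rightarrow> bool) pmf" where
  "Dist 0 = return_pmf (\<lambda>_. False)"
| "Dist (Suc r) = Dist r \<bind> (\<lambda>d. map_pmf (upd r d) (Pi_r r d))"

lemma length_evs[simp]: "length (evs r d v) = 2 * r"
  by (induction r) auto

lemma evs_nth: "j < r \<Longrightarrow> evs r d v ! (2 * j) = Rand (if col v = j then rind (d v) else 0)"
proof (induction r)
  case 0 then show ?case by simp
next
  case (Suc r)
  show ?case
  proof (cases "j < r")
    case True then show ?thesis using Suc by (simp add: nth_append)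
  next
    case False then have "j = r" using Suc by simp
    then show ?thesis by (simp add: nth_append)
  qed
qed

lemma evs_cong: "(\<And>x. col x < r \<Longrightarrow> d x = d' x) \<Longrightarrow> evs r d v = evs r d' v"
  by (induction r) (auto intro!: ext)

lemma init_fst: "init v = ((v, c, col v, {u. E v u}, Lv v), [])"
  by (simp add: init_config_def Lv_def)

lemma coin_cfg:
  assumes "v \<in> V"
  shows "coin Alg (cfg r d v) = (if col v = r then map_pmf rind (bernoulli_pmf (pg r d v)) else return_pmf 0)"
proof (cases "col v = r")
  case False then show ?thesis using assms
    by (simp add: cfg_def init_fst Alg_def alg_coin_def)
next
  case True
  have "prob (local_pa v (evs r d v)) v (Lv v) = prob (gpa r d) v (Lv v)"
  proof (rule prob_cong)
    fix cl w x assume clw: "(cl, w) \<in> set (Lv v)" and x: "x \<in> clause_vars cl"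
    have clC: "(cl, w) \<in> set C" and vcl: "v \<in> clause_vars cl" using clw by (auto simp: Lv_def)
    show "local_pa v (evs r d v) x = gpa r d x"
    proof (cases "x = v")
      case True then show ?thesis using \<open>col v = r\<close> by (simp add: local_pa_def gpa_def)
    next
      case False
      have Exv: "E x v" "x \<in> V" using clause_adj[OF clC x vcl False] Esym by auto
      show ?thesis
      proof (cases r)
        case 0 then show ?thesis using False by (simp add: local_pa_def gpa_def last_msgs_def)
      next
        case (Suc r')
        then show ?thesis using False Exv
          by (auto simp: local_pa_def gpa_def last_msgs_def)
      qed
    qed
  qed
  then show ?thesis using assms True
    by (simp add: cfg_def init_fst Alg_def alg_coin_def pg_def)
qed

lemma rho_vals:
  assumes "\<rho> \<in> set_pmf (Pi_r r d)" "v \<in> V"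
  shows "\<rho> v = (if col v = r then rind (upd r d \<rho> v) else 0)"
proof -
  have "\<rho> v \<in> set_pmf (coin Alg (cfg r d v))"
    using assms finV by (auto simp: Pi_r_def set_Pi_pmf PiE_dflt_def)
  then show ?thesis using assms(2) by (auto simp: coin_cfg upd_def rind_def split: if_splits)
qed

lemma rho_out: "\<rho> \<in> set_pmf (Pi_r r d) \<Longrightarrow> v \<notin> V \<Longrightarrow> \<rho> v = 0"
  using finV by (auto simp: Pi_r_def set_Pi_pmf PiE_dflt_def)

lemma send_drawn:
  assumes "\<rho> \<in> set_pmf (Pi_r r d)" "u \<in> V"
  shows "send Alg (drawn V (cfg r d) \<rho> u) v = (if col u \<le> r then [upd r d \<rho> u] else [])"
proof -
  have st: "drawn V (cfg r d) \<rho> u = ((u, c, col u, {x. E u x}, Lv u), evs r d u @ [Rand (\<rho> u)])"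
    using assms(2) by (simp add: drawn_def cfg_def init_fst)
  show ?thesis
  proof (cases "col u < r")
    case True
    then show ?thesis using st evs_nth[OF True, of d u]
      by (simp add: Alg_def alg_send_def nth_append upd_def)
  next
    case False
    show ?thesis
    proof (cases "col u = r")
      case True
      then show ?thesis using st rho_vals[OF assms]
        by (simp add: Alg_def alg_send_def nth_append)
    next
      case False
      then show ?thesis using st \<open>\<not> col u < r\<close> by (simp add: Alg_def alg_send_def)
    qed
  qed
qed

lemma step_cfg:
  assumes "\<rho> \<in> set_pmf (Pi_r r d)"
  shows "deliver Alg V E (drawn V (cfg r d) \<rho>) = cfg (Suc r) (upd r d \<rho>)"
proof (rule ext)
  fix v
  show "deliver Alg V E (drawn V (cfg r d) \<rho>) v = cfg (Suc r) (upd r d \<rho>) v"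
  proof (cases "v \<in> V")
    case False then show ?thesis by (simp add: deliver_def drawn_def cfg_def)
  next
    case True
    have ev: "evs r (upd r d \<rho>) v = evs r d v" by (rule evs_cong) (auto simp: upd_def)
    have rv: "\<rho> v = (if col v = r then rind (upd r d \<rho> v) else 0)" by (rule rho_vals[OF assms True])
    have msg: "(\<lambda>u. if u \<in> V \<and> E u v then send Alg (drawn V (cfg r d) \<rho> u) v else []) =
       (\<lambda>u. if u \<in> V \<and> E u v \<and> col u \<le> r then [upd r d \<rho> u] else [])"
      using send_drawn[OF assms] by (auto intro!: ext)
    have dv: "drawn V (cfg r d) \<rho> v = (fst (init v), evs r d v @ [Rand (\<rho> v)])"
      using True by (simp add: drawn_def cfg_def)
    show ?thesis using True
      apply (simp add: deliver_def dv msg)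
      apply (simp add: cfg_def ev rv)
      done
  qed
qed

lemma run_Dist: "run Alg V E init r = map_pmf (cfg r) (Dist r)"
proof (induction r)
  case 0
  have "init = cfg 0 (\<lambda>_. False)" by (auto simp: cfg_def init_config_def)
  then show ?case by simp
next
  case (Suc r)
  have "run Alg V E init (Suc r) = Dist r \<bind> (\<lambda>d. step Alg V E (cfg r d))"
    by (simp add: Suc bind_map_pmf)
  also have "\<dots> = Dist r \<bind> (\<lambda>d. map_pmf (cfg (Suc r)) (map_pmf (upd r d) (Pi_r r d)))"
  proof (rule bind_pmf_cong[OF refl])
    fix d
    show "step Alg V E (cfg r d) = map_pmf (cfg (Suc r)) (map_pmf (upd r d) (Pi_r r d))"
      unfolding step_def pmf.map_comp Pi_r_def[symmetric]
      by (rule map_pmf_cong[OF refl]) (simp add: step_cfg)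
  qed
  also have "\<dots> = map_pmf (cfg (Suc r)) (Dist (Suc r))"
    by (simp add: map_bind_pmf)
  finally show ?case .
qed

end



context setting begin

definition clx :: "nat \<Rightarrow> clause" where "clx i = fst (C ! i)"
definition wx :: "nat \<Rightarrow> real" where "wx i = snd (C ! i)"

lemma clx_in: "i < length C \<Longrightarrow> (clx i, wx i) \<in> set C"
  by (simp add: clx_def wx_def)

lemma wx_nonneg: "i < length C \<Longrightarrow> 0 \<le> wx i"
  using clause_w[OF clx_in] by blast

definition hyb :: "(nat \<Rightarrow> bool) \<Rightarrow> nat \<Rightarrow> (nat \<Rightarrow> bool) \<Rightarrow> nat \<Rightarrow> bool" where
  "hyb a0 r d x = (if x \<in> V \<and> col x < r then d x else a0 x)"

definition phi :: "(nat \<Rightarrow> bool) \<Rightarrow> nat \<Rightarrow> (nat \<Rightarrow> bool) \<Rightarrow> clause \<Rightarrow> real" where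
  "phi a0 r d cl = beta (gpa r d) cl + rind (sat_clause (hyb a0 r d) cl)"

definition psi :: "(nat \<Rightarrow> bool) \<Rightarrow> nat \<Rightarrow> (nat \<Rightarrow> bool) \<Rightarrow> nat \<Rightarrow> bool \<Rightarrow> clause \<Rightarrow> real" where
  "psi a0 r d v b cl = beta ((gpa r d)(v:=Some b)) cl + rind (sat_clause ((hyb a0 r d)(v:=b)) cl)"

definition Phi :: "(nat \<Rightarrow> bool) \<Rightarrow> nat \<Rightarrow> (nat \<Rightarrow> bool) \<Rightarrow> real" where
  "Phi a0 r d = (\<Sum>i<length C. wx i * phi a0 r d (clx i))"

definition WS :: real where "WS = (\<Sum>i<length C. wx i * 2)"

lemma beta_bounds: "0 \<le> beta pa cl \<and> beta pa cl \<le> 1"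
  by (simp add: beta_def rind_def)

lemma phi_bounds: "0 \<le> phi a0 r d cl \<and> phi a0 r d cl \<le> 2"
  using beta_bounds[of "gpa r d" cl] by (simp add: phi_def rind_def)

lemma psi_bounds: "0 \<le> psi a0 r d v b cl \<and> psi a0 r d v b cl \<le> 2"
  using beta_bounds[of "(gpa r d)(v:=Some b)" cl] by (simp add: psi_def rind_def)

lemma Phi_bounds: "0 \<le> Phi a0 r d \<and> Phi a0 r d \<le> WS"
proof
  show "0 \<le> Phi a0 r d" unfolding Phi_def
    using wx_nonneg phi_bounds by (intro sum_nonneg mult_nonneg_nonneg) auto
  show "Phi a0 r d \<le> WS" unfolding Phi_def WS_def
    using wx_nonneg phi_bounds by (intro sum_mono mult_left_mono) auto
qed

lemma Phi_abs: "\<bar>Phi a0 r d\<bar> \<le> WS"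
  using Phi_bounds[of a0 r d] by simp

lemma sat_weight_idx: "sat_weight C a = (\<Sum>i<length C. wx i * rind (sat_clause a (clx i)))"
proof -
  have "sat_weight C a = (\<Sum>i = 0..<length C. (\<lambda>(cl, w). if sat_clause a cl then w else 0) (C ! i))"
    unfolding sat_weight_def by (simp add: sum_list_sum_nth)
  also have "\<dots> = (\<Sum>i<length C. wx i * rind (sat_clause a (clx i)))"
    by (intro sum.cong) (auto simp: clx_def wx_def rind_def case_prod_beta atLeast0LessThan)
  finally show ?thesis .
qed

definition S :: "nat \<Rightarrow> nat set" where "S r = {v \<in> V. col v = r}"
definition I0 :: "nat \<Rightarrow> nat set" where "I0 r = {i. i < length C \<and> (\<forall>x\<in>clause_vars (clx i). col x \<noteq> r)}"
definition Iv :: "nat \<Rightarrow> nat set" where "Iv v = {i. i < length C \<and> v \<in> clause_vars (clx i)}"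

lemma finS: "finite (S r)" using finV by (simp add: S_def)

lemma split_sum: "(\<Sum>i<length C. f i) = (\<Sum>i\<in>I0 r. f i) + (\<Sum>v\<in>S r. \<Sum>i\<in>Iv v. f i)"
proof -
  have cover: "{..<length C} = I0 r \<union> (\<Union>v\<in>S r. Iv v)"
  proof (rule set_eqI)
    fix i
    show "i \<in> {..<length C} \<longleftrightarrow> i \<in> I0 r \<union> (\<Union>v\<in>S r. Iv v)"
    proof
      assume i: "i \<in> {..<length C}"
      show "i \<in> I0 r \<union> (\<Union>v\<in>S r. Iv v)"
      proof (cases "\<forall>x\<in>clause_vars (clx i). col x \<noteq> r")
        case True then show ?thesis using i by (simp add: I0_def)
      next
        case False
        then obtain x where x: "x \<in> clause_vars (clx i)" "col x = r" by blast
        have "x \<in> V" using clause_V[OF clx_in x(1)] i by simp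
        then show ?thesis using x i by (auto simp: S_def Iv_def)
      qed
    next
      assume "i \<in> I0 r \<union> (\<Union>v\<in>S r. Iv v)"
      then show "i \<in> {..<length C}" by (auto simp: I0_def Iv_def)
    qed
  qed
  have d1: "I0 r \<inter> (\<Union>v\<in>S r. Iv v) = {}" by (auto simp: I0_def Iv_def S_def)
  have d2: "\<forall>v\<in>S r. \<forall>v'\<in>S r. v \<noteq> v' \<longrightarrow> Iv v \<inter> Iv v' = {}"
  proof (intro ballI impI)
    fix v v' assume v: "v \<in> S r" "v' \<in> S r" "v \<noteq> v'"
    show "Iv v \<inter> Iv v' = {}"
    proof (rule ccontr)
      assume "Iv v \<inter> Iv v' \<noteq> {}"
      then obtain i where i: "i < length C" "v \<in> clause_vars (clx i)" "v' \<in> clause_vars (clx i)"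
        by (auto simp: Iv_def)
      have "E v v'" using clause_adj[OF clx_in[OF i(1)] i(2,3) v(3)] .
      then have "col v \<noteq> col v'" by (rule Ecol)
      then show False using v by (simp add: S_def)
    qed
  qed
  have f1: "finite (I0 r)" by (simp add: I0_def)
  have f2: "\<forall>v\<in>S r. finite (Iv v)" by (simp add: Iv_def)
  have "(\<Sum>i<length C. f i) = (\<Sum>i\<in>I0 r \<union> (\<Union>v\<in>S r. Iv v). f i)" using cover by simp
  also have "\<dots> = (\<Sum>i\<in>I0 r. f i) + (\<Sum>i\<in>(\<Union>v\<in>S r. Iv v). f i)"
    by (rule sum.union_disjoint) (use f1 f2 finS d1 in auto)
  also have "(\<Sum>i\<in>(\<Union>v\<in>S r. Iv v). f i) = (\<Sum>v\<in>S r. \<Sum>i\<in>Iv v. f i)"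
    by (rule sum.UNION_disjoint[OF finS f2 d2])
  finally show ?thesis .
qed

lemma phi_I0:
  assumes "i \<in> I0 r"
  shows "phi a0 (Suc r) (upd r d \<rho>) (clx i) = phi a0 r d (clx i)"
proof -
  have i: "i < length C" "\<And>x. x \<in> clause_vars (clx i) \<Longrightarrow> col x \<noteq> r" using assms by (auto simp: I0_def)
  have g: "gpa (Suc r) (upd r d \<rho>) x = gpa r d x" if "x \<in> clause_vars (clx i)" for x
    using i(2)[OF that] by (auto simp: gpa_def upd_def less_Suc_eq)
  have h: "hyb a0 (Suc r) (upd r d \<rho>) x = hyb a0 r d x" if "x \<in> clause_vars (clx i)" for x
    using i(2)[OF that] by (auto simp: hyb_def upd_def less_Suc_eq)
  show ?thesis unfolding phi_def
    using beta_cong[of "clx i", OF g] sat_cong[of "clx i", OF h] by simp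
qed

lemma phi_Iv:
  assumes v: "v \<in> S r" and i: "i \<in> Iv v"
  shows "phi a0 (Suc r) (upd r d \<rho>) (clx i) = psi a0 r d v (\<rho> v = 1) (clx i)"
proof -
  have i': "i < length C" "v \<in> clause_vars (clx i)" using i by (auto simp: Iv_def)
  have vv: "v \<in> V" "col v = r" using v by (auto simp: S_def)
  have other: "col x \<noteq> r" if "x \<in> clause_vars (clx i)" "x \<noteq> v" for x
  proof -
    have "E x v" using clause_adj[OF clx_in[OF i'(1)] that(1) i'(2) that(2)] .
    then show ?thesis using Ecol vv by auto
  qed
  have g: "gpa (Suc r) (upd r d \<rho>) x = ((gpa r d)(v:=Some (\<rho> v = 1))) x" if "x \<in> clause_vars (clx i)" for x
  proof (cases "x = v")
    case True then show ?thesis using vv by (simp add: gpa_def upd_def)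
  next
    case False then show ?thesis using other[OF that False] by (auto simp: gpa_def upd_def less_Suc_eq)
  qed
  have h: "hyb a0 (Suc r) (upd r d \<rho>) x = ((hyb a0 r d)(v:=(\<rho> v = 1))) x" if "x \<in> clause_vars (clx i)" for x
  proof (cases "x = v")
    case True then show ?thesis using vv by (simp add: hyb_def upd_def)
  next
    case False then show ?thesis using other[OF that False] by (auto simp: hyb_def upd_def less_Suc_eq)
  qed
  have b1: "beta (gpa (Suc r) (upd r d \<rho>)) (clx i) = beta ((gpa r d)(v:=Some (\<rho> v = 1))) (clx i)"
    by (rule beta_cong) (rule g)
  have s1: "sat_clause (hyb a0 (Suc r) (upd r d \<rho>)) (clx i) = sat_clause ((hyb a0 r d)(v:=(\<rho> v = 1))) (clx i)"
    by (rule sat_cong) (rule h)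
  show ?thesis unfolding phi_def psi_def by (simp only: b1 s1)
qed

definition G :: "(nat \<Rightarrow> bool) \<Rightarrow> nat \<Rightarrow> (nat \<Rightarrow> bool) \<Rightarrow> nat \<Rightarrow> bool \<Rightarrow> real" where
  "G a0 r d v b = (\<Sum>i\<in>Iv v. wx i * psi a0 r d v b (clx i))"

lemma Phi_Suc_split:
  "Phi a0 (Suc r) (upd r d \<rho>) = (\<Sum>i\<in>I0 r. wx i * phi a0 r d (clx i)) + (\<Sum>v\<in>S r. G a0 r d v (\<rho> v = 1))"
  unfolding Phi_def split_sum[of _ r] G_def
  by (simp add: phi_I0 phi_Iv cong: sum.cong)

lemma asum_idx:
  "asum pa v b (Lv v) = (\<Sum>i\<in>Iv v. wx i * (beta (pa(v:=Some b)) (clx i) - beta pa (clx i)))"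
proof -
  have eqt: "(\<lambda>(cl,w). w * (beta (pa(v:=Some b)) cl - beta pa cl)) (C ! i)
      = wx i * (beta (pa(v:=Some b)) (clx i) - beta pa (clx i))" for i
    by (cases "C ! i") (simp only: clx_def wx_def fst_conv snd_conv prod.case)
  have "asum pa v b (Lv v) = (\<Sum>i\<in>{i. i < length C \<and> (\<lambda>(cl, w). v \<in> clause_vars cl) (C ! i)}.
          (\<lambda>(cl,w). w * (beta (pa(v:=Some b)) cl - beta pa cl)) (C ! i))"
    unfolding asum_def Lv_def by (rule sum_list_filter_idx)
  also have "{i. i < length C \<and> (\<lambda>(cl, w). v \<in> clause_vars cl) (C ! i)} = Iv v"
    by (auto simp: Iv_def clx_def case_prod_beta)
  also have "(\<Sum>i\<in>Iv v. (\<lambda>(cl,w). w * (beta (pa(v:=Some b)) cl - beta pa cl)) (C ! i))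
      = (\<Sum>i\<in>Iv v. wx i * (beta (pa(v:=Some b)) (clx i) - beta pa (clx i)))"
    by (rule sum.cong[OF refl eqt])
  finally show ?thesis .
qed

lemma local_step:
  assumes v: "v \<in> S r"
  shows "(\<Sum>i\<in>Iv v. wx i * phi a0 r d (clx i)) \<le> pg r d v * G a0 r d v True + (1 - pg r d v) * G a0 r d v False"
proof -
  have vv: "v \<in> V" "col v = r" using v by (auto simp: S_def)
  have pv: "gpa r d v = None" using vv by (simp add: gpa_def)
  have cons: "\<And>x y. gpa r d x = Some y \<Longrightarrow> hyb a0 r d x = y"
    by (auto simp: gpa_def hyb_def split: if_splits)
  have fin: "finite (Iv v)" by (simp add: Iv_def)
  have wpos: "\<And>i. i \<in> Iv v \<Longrightarrow> 0 \<le> wx i" using wx_nonneg by (auto simp: Iv_def)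
  have pdef: "pg r d v = (if asum (gpa r d) v False (Lv v) \<le> 0 then 1
      else if asum (gpa r d) v True (Lv v) \<le> 0 then 0
      else asum (gpa r d) v True (Lv v) / (asum (gpa r d) v True (Lv v) + asum (gpa r d) v False (Lv v)))"
    by (simp add: pg_def prob_def)
  show ?thesis
    unfolding G_def psi_def phi_def
    by (rule local_ineq[OF fin wpos pv cons asum_idx asum_idx pdef])
qed

lemma exp_G:
  assumes v: "v \<in> S r"
  shows "measure_pmf.expectation (Pi_r r d) (\<lambda>\<rho>. G a0 r d v (\<rho> v = 1))
       = pg r d v * G a0 r d v True + (1 - pg r d v) * G a0 r d v False"
proof -
  have vv: "v \<in> V" "col v = r" using v by (auto simp: S_def)
  have "measure_pmf.expectation (Pi_r r d) (\<lambda>\<rho>. G a0 r d v (\<rho> v = 1))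
      = measure_pmf.expectation (map_pmf (\<lambda>f. f v) (Pi_r r d)) (\<lambda>x. G a0 r d v (x = 1))"
    by simp
  also have "map_pmf (\<lambda>f. f v) (Pi_r r d) = coin Alg (cfg r d v)"
    unfolding Pi_r_def by (subst Pi_pmf_component[OF finV]) (simp add: vv)
  also have "\<dots> = map_pmf rind (bernoulli_pmf (pg r d v))" using coin_cfg[OF vv(1)] vv by simp
  finally show ?thesis using prob_range[of "gpa r d" v "Lv v"]
    by (simp add: pg_def algebra_simps)
qed

lemma exp_step:
  "Phi a0 r d \<le> measure_pmf.expectation (Pi_r r d) (\<lambda>\<rho>. Phi a0 (Suc r) (upd r d \<rho>))"
proof -
  define K where "K = (\<Sum>i\<in>I0 r. wx i * phi a0 r d (clx i))"
  have intG: "integrable (measure_pmf (Pi_r r d)) (\<lambda>\<rho>. G a0 r d v (\<rho> v = 1))" for v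
    apply (rule bounded_integrable[where B="\<bar>G a0 r d v True\<bar> + \<bar>G a0 r d v False\<bar>"])
    subgoal for x by (cases "x v = 1") auto
    done
  have "measure_pmf.expectation (Pi_r r d) (\<lambda>\<rho>. Phi a0 (Suc r) (upd r d \<rho>))
      = measure_pmf.expectation (Pi_r r d) (\<lambda>\<rho>. K + (\<Sum>v\<in>S r. G a0 r d v (\<rho> v = 1)))"
    unfolding Phi_Suc_split K_def ..
  also have "\<dots> = K + (\<Sum>v\<in>S r. measure_pmf.expectation (Pi_r r d) (\<lambda>\<rho>. G a0 r d v (\<rho> v = 1)))"
  proof -
    have i2: "integrable (measure_pmf (Pi_r r d)) (\<lambda>\<rho>. \<Sum>v\<in>S r. G a0 r d v (\<rho> v = 1))"
      by (rule Bochner_Integration.integrable_sum) (rule intG)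
    have "measure_pmf.expectation (Pi_r r d) (\<lambda>\<rho>. K + (\<Sum>v\<in>S r. G a0 r d v (\<rho> v = 1)))
        = measure_pmf.expectation (Pi_r r d) (\<lambda>\<rho>. K) + measure_pmf.expectation (Pi_r r d) (\<lambda>\<rho>. \<Sum>v\<in>S r. G a0 r d v (\<rho> v = 1))"
      by (rule Bochner_Integration.integral_add[OF _ i2]) simp
    also have "measure_pmf.expectation (Pi_r r d) (\<lambda>\<rho>. \<Sum>v\<in>S r. G a0 r d v (\<rho> v = 1))
        = (\<Sum>v\<in>S r. measure_pmf.expectation (Pi_r r d) (\<lambda>\<rho>. G a0 r d v (\<rho> v = 1)))"
      by (rule Bochner_Integration.integral_sum) (rule intG)
    finally show ?thesis by simp
  qed
  also have "\<dots> = K + (\<Sum>v\<in>S r. pg r d v * G a0 r d v True + (1 - pg r d v) * G a0 r d v False)"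
    by (simp add: exp_G)
  also have "\<dots> \<ge> K + (\<Sum>v\<in>S r. \<Sum>i\<in>Iv v. wx i * phi a0 r d (clx i))"
    using local_step by (simp add: sum_mono)
  also have "K + (\<Sum>v\<in>S r. \<Sum>i\<in>Iv v. wx i * phi a0 r d (clx i)) = Phi a0 r d"
    unfolding K_def Phi_def by (rule split_sum[symmetric])
  finally show ?thesis .
qed

lemma exp_Dist: "Phi a0 0 (\<lambda>_. False) \<le> measure_pmf.expectation (Dist r) (Phi a0 r)"
proof (induction r)
  case 0 then show ?case by simp
next
  case (Suc r)
  have inner_int: "integrable (measure_pmf M) (\<lambda>d. measure_pmf.expectation (Pi_r r d) (\<lambda>\<rho>. Phi a0 (Suc r) (upd r d \<rho>)))" for M
  proof (rule bounded_integrable[where B=WS])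
    fix d
    have i: "integrable (measure_pmf (Pi_r r d)) (\<lambda>\<rho>. Phi a0 (Suc r) (upd r d \<rho>))"
      by (rule bounded_integrable[where B=WS]) (rule Phi_abs)
    have "0 \<le> measure_pmf.expectation (Pi_r r d) (\<lambda>\<rho>. Phi a0 (Suc r) (upd r d \<rho>))"
      using Phi_bounds by (intro integral_nonneg_AE) auto
    moreover have "measure_pmf.expectation (Pi_r r d) (\<lambda>\<rho>. Phi a0 (Suc r) (upd r d \<rho>)) \<le> WS"
      using Phi_bounds by (intro measure_pmf.integral_le_const[OF i]) auto
    ultimately show "\<bar>measure_pmf.expectation (Pi_r r d) (\<lambda>\<rho>. Phi a0 (Suc r) (upd r d \<rho>))\<bar> \<le> WS"
      by simp
  qed
  have "measure_pmf.expectation (Dist (Suc r)) (Phi a0 (Suc r))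
      = measure_pmf.expectation (Dist r) (\<lambda>d. measure_pmf.expectation (map_pmf (upd r d) (Pi_r r d)) (Phi a0 (Suc r)))"
    by (simp only: Dist.simps) (rule integral_bind_pmf_bounded[where B=WS], rule Phi_abs)
  also have "\<dots> = measure_pmf.expectation (Dist r) (\<lambda>d. measure_pmf.expectation (Pi_r r d) (\<lambda>\<rho>. Phi a0 (Suc r) (upd r d \<rho>)))"
    by simp
  also have "\<dots> \<ge> measure_pmf.expectation (Dist r) (Phi a0 r)"
    by (rule integral_mono[OF bounded_integrable[where B=WS] inner_int exp_step]) (rule Phi_abs)
  finally show ?case using Suc by simp
qed

lemma beta_full: "beta (\<lambda>x. Some (d x)) cl = rind (sat_clause d cl)"
proof -
  have "psat (\<lambda>x. Some (d x)) cl = sat_clause d cl" by (induction cl) auto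
  moreover have "pfals (\<lambda>x. Some (d x)) cl = (\<not> sat_clause d cl)" by (induction cl) auto
  ultimately show ?thesis by (simp add: beta_def rind_def)
qed

lemma Phi_final: "Phi a0 c d = 2 * sat_weight C d"
proof -
  have "phi a0 c d (clx i) = 2 * rind (sat_clause d (clx i))" if i: "i < length C" for i
  proof -
    have inV: "\<And>x. x \<in> clause_vars (clx i) \<Longrightarrow> x \<in> V \<and> col x < c"
      using clause_V[OF clx_in[OF i]] colV by blast
    have "beta (gpa c d) (clx i) = beta (\<lambda>x. Some (d x)) (clx i)"
      by (rule beta_cong) (simp add: gpa_def inV)
    moreover have "sat_clause (hyb a0 c d) (clx i) = sat_clause d (clx i)"
      by (rule sat_cong) (simp add: hyb_def inV)
    ultimately show ?thesis by (simp add: phi_def beta_full)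
  qed
  then show ?thesis unfolding Phi_def sat_weight_idx
    by (simp add: sum_distrib_left algebra_simps)
qed

lemma beta_none: "beta (\<lambda>_. None) cl = rind (cl \<noteq> []) / 2"
proof -
  have "\<not> psat (\<lambda>_. None) cl" by (induction cl) auto
  moreover have "pfals (\<lambda>_. None) cl = (cl = [])" by (cases cl) auto
  ultimately show ?thesis by (simp add: beta_def rind_def)
qed

lemma Phi_init: "3/2 * sat_weight C a0 \<le> Phi a0 0 (\<lambda>_. False)"
proof -
  have "3/2 * rind (sat_clause a0 cl) \<le> phi a0 0 (\<lambda>_. False) cl" for cl
  proof -
    have g: "gpa 0 (\<lambda>_. False) = (\<lambda>_. None)" by (simp add: gpa_def fun_eq_iff)
    have h: "hyb a0 0 (\<lambda>_. False) = a0" by (simp add: hyb_def fun_eq_iff)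
    have "sat_clause a0 cl \<Longrightarrow> cl \<noteq> []" by auto
    then show ?thesis unfolding phi_def g h beta_none by (auto simp: rind_def)
  qed
  then have "(\<Sum>i<length C. wx i * (3/2 * rind (sat_clause a0 (clx i)))) \<le> Phi a0 0 (\<lambda>_. False)"
    unfolding Phi_def using wx_nonneg by (intro sum_mono mult_left_mono) auto
  then show ?thesis unfolding sat_weight_idx by (simp add: sum_distrib_left algebra_simps)
qed

lemma out_cfg: "v \<in> V \<Longrightarrow> output_assignment Alg (cfg c d) v = d v"
  using evs_nth[OF colV, of v d v]
  by (simp add: output_assignment_def cfg_def init_fst Alg_def alg_out_def rind_def)

lemma main_local:
  "3/4 * sat_weight C a0 \<le> measure_pmf.expectation (run Alg V E init c) (\<lambda>\<sigma>. sat_weight C (output_assignment Alg \<sigma>))"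
proof -
  have so: "sat_weight C (output_assignment Alg (cfg c d)) = Phi a0 c d / 2" for d
  proof -
    have "sat_weight C (output_assignment Alg (cfg c d)) = sat_weight C d"
      unfolding sat_weight_idx
      by (intro sum.cong refl arg_cong[where f="\<lambda>x. _ * rind x"] sat_cong)
         (simp add: out_cfg clause_V[OF clx_in])
    then show ?thesis by (simp add: Phi_final)
  qed
  have "measure_pmf.expectation (run Alg V E init c) (\<lambda>\<sigma>. sat_weight C (output_assignment Alg \<sigma>))
      = measure_pmf.expectation (Dist c) (\<lambda>d. Phi a0 c d / 2)"
    by (simp add: run_Dist so)
  also have "\<dots> = measure_pmf.expectation (Dist c) (Phi a0 c) / 2" by simp
  finally show ?thesis using exp_Dist[of a0 c] Phi_init[of a0] by simp
qed

lemma main_opt: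
  "3/4 * opt_weight C \<le> measure_pmf.expectation (run Alg V E init c) (\<lambda>\<sigma>. sat_weight C (output_assignment Alg \<sigma>))"
proof -
  let ?X = "measure_pmf.expectation (run Alg V E init c) (\<lambda>\<sigma>. sat_weight C (output_assignment Alg \<sigma>))"
  have "opt_weight C \<le> 4/3 * ?X"
    unfolding opt_weight_def
  proof (rule cSUP_least)
    fix a
    show "sat_weight C a \<le> 4/3 * ?X" using main_local[of a] by linarith
  qed simp
  then show ?thesis by simp
qed

end

theorem mainTheorem15:
  "\<exists>(A :: algo) (K :: nat) (B :: nat).
     \<forall>V E C col c.
       graph V E \<longrightarrow> weighted_max2sat C \<longrightarrow> compatible V E C \<longrightarrow>
       legal_coloring V E col c \<longrightarrow>
         congest_bandwidth A V E (init_config V E C col c) (K * c) B \<and>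
         measure_pmf.expectation (run A V E (init_config V E C col c) (K * c))
            (\<lambda>\<sigma>. sat_weight C (output_assignment A \<sigma>))
           \<ge> 3 / 4 * opt_weight C"
proof (intro exI[of _ Alg] exI[of _ 1] allI impI conjI)
  fix V E C col c
  assume a: "graph V E" "weighted_max2sat C" "compatible V E C" "legal_coloring V E col c"
  show "congest_bandwidth Alg V E (init_config V E C col c) (1 * c) 1"
    unfolding congest_bandwidth_def using send_len
    by (auto intro: order_trans[OF send_len])
  interpret setting V E C col c using a by unfold_locales
  show "measure_pmf.expectation (run Alg V E (init_config V E C col c) (1 * c))
            (\<lambda>\<sigma>. sat_weight C (output_assignment Alg \<sigma>)) \<ge> 3 / 4 * opt_weight C"
    using main_opt by simp
qed


end
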